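(* Let $\Omega=\{\omega_1,\dots,\omega_n\}$ be a finite set of bids, let $u:\Omega\to[0,1]$ be a utility function, let $a:\Omega\to[0,1]$ be a (static) acceptance-probability function, let $\mathit{rv}$ be a real number (the reservation value), and let $D\le n$ be a positive integer (the deadline). For a finite sequence $\pi=(x_1,\dots,x_k)$ of elements of $\Omega$, writing $u_i=u(x_i)$ and $a_i=a(x_i)$, define $$EU_{\mathit{rv}}(\pi)=\sum_{i=1}^{k} u_i\, a_i\prod_{j=1}^{i-1}(1-a_j)+\mathit{rv}\cdot\prod_{j=1}^{k}(1-a_j).$$ Consider the algorithm MIA-RVelous: for $k=1,\dots,D$ in turn, choose $$x_k\in\operatorname{argmax}_{\omega\in\Omega\setminus\{x_1,\dots,x_{k-1}\}} EU_{\mathit{rv}}\big(\mathrm{sort}(\{x_1,\dots,x_{k-1},\omega\})\big),$$ and finally output $\pi^*=\mathrm{sort}(\{x_1,\dots,x_D\})$, where $\mathrm{sort}(S)$ denotes the sequence of the elements of a set $S\subseteq\Omega$ arranged in order of decreasing utility $u$. Then the output $\pi^*$ is an optimal bid sequence, i.e. $$\pi^*\in\operatorname{argmax}_{\pi\in\Omega^{D}} EU_{\mathit{rv}}(\pi).$$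
   Context: Setting: bilateral negotiation under the alternating offers protocol, from the perspective of one agent who plans a whole sequence of bids $\pi=(x_1,\dots,x_k)$ in advance. Each bid $x_i$ is accepted by the opponent with probability $a(x_i)$, independently of time (static acceptance model); if accepted the agent receives utility $u(x_i)$, and if all bids are rejected by the deadline $D$ the agent receives the reservation value $\mathit{rv}$. $EU_{\mathit{rv}}(\pi)$ is the resulting expected utility. $\Omega^D$ is the set of all sequences of length $D$ of elements of $\Omega$. *)

theory Defs
  imports Complex_Main
begin

definition EU :: "real \<Rightarrow> ('a \<Rightarrow> real) \<Rightarrow> ('a \<Rightarrow> real) \<Rightarrow> 'a list \<Rightarrow> real" where
  "EU rv u a xs =
     (\<Sum>i<length xs. u (xs ! i) * a (xs ! i) * (\<Prod>j<i. 1 - a (xs ! j)))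
     + rv * (\<Prod>j<length xs. 1 - a (xs ! j))"

text \<open>Elements of a finite set arranged in order of decreasing utility
  (ties broken by the underlying linear order; ties do not affect EU).\<close>
definition sort_dec :: "('a::linorder \<Rightarrow> real) \<Rightarrow> 'a set \<Rightarrow> 'a list" where
  "sort_dec u S = sort_key (\<lambda>x. - u x) (sorted_list_of_set S)"

definition mia_run :: "'a::linorder set \<Rightarrow> ('a \<Rightarrow> real) \<Rightarrow> ('a \<Rightarrow> real) \<Rightarrow> real \<Rightarrow> nat \<Rightarrow> 'a list \<Rightarrow> bool" where
  "mia_run \<Omega> u a rv D xs \<longleftrightarrow>
     length xs = D \<and>
     (\<forall>k<D. xs ! k \<in> \<Omega> - set (take k xs) \<and>
        (\<forall>\<omega>\<in>\<Omega> - set (take k xs).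
           EU rv u a (sort_dec u (insert \<omega> (set (take k xs))))
             \<le> EU rv u a (sort_dec u (insert (xs ! k) (set (take k xs))))))"

end

theory Submission
  imports Defs "HOL-Library.Multiset"
begin

definition phi :: "('a \<Rightarrow> real) \<Rightarrow> ('a \<Rightarrow> real) \<Rightarrow> 'a \<Rightarrow> real \<Rightarrow> real" where
  "phi u a x z = u x * a x + (1 - a x) * z"

lemma EU_Nil[simp]: "EU rv u a [] = rv"
  by (simp add: EU_def)

lemma EU_Cons[simp]: "EU rv u a (x # xs) = phi u a x (EU rv u a xs)"
proof -
  have s: "(\<Sum>i<length (x#xs). u ((x#xs) ! i) * a ((x#xs) ! i) * (\<Prod>j<i. 1 - a ((x#xs) ! j)))
     = u x * a x + (1 - a x) * (\<Sum>i<length xs. u (xs ! i) * a (xs ! i) * (\<Prod>j<i. 1 - a (xs ! j)))"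
  proof -
    have q: "\<And>i. (\<Prod>j<Suc i. 1 - a ((x#xs) ! j)) = (1 - a x) * (\<Prod>j<i. 1 - a (xs ! j))"
      by (simp only: prod.lessThan_Suc_shift) simp
    show ?thesis
      by (simp only: length_Cons sum.lessThan_Suc_shift q) (simp add: sum_distrib_left mult_ac)
  qed
  have p: "(\<Prod>j<length (x#xs). 1 - a ((x#xs) ! j)) = (1 - a x) * (\<Prod>j<length xs. 1 - a (xs ! j))"
    by (simp add: prod.lessThan_Suc_shift del: prod.lessThan_Suc)
  show ?thesis unfolding EU_def phi_def s p by (simp add: algebra_simps)
qed

lemma phi_comm: "u x = u y \<Longrightarrow> phi u a x (phi u a y z) = phi u a y (phi u a x z)"
  by (simp add: phi_def algebra_simps)

lemma phi_mono: "0 \<le> 1 - a x \<Longrightarrow> z \<le> z' \<Longrightarrow> phi u a x z \<le> phi u a x z'"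
  by (simp add: phi_def mult_left_mono)

lemma EU_move_front:
  assumes "\<forall>p\<in>set ps. u p = u x"
  shows "EU rv u a (ps @ x # qs) = EU rv u a (x # ps @ qs)"
  using assms by (induction ps) (auto simp: phi_comm)

lemma EU_unique:
  assumes "sorted (map (\<lambda>x. - u x) xs)" "sorted (map (\<lambda>x. - u x) ys)" "mset xs = mset ys"
  shows "EU rv u a xs = EU rv u a ys"
  using assms
proof (induction xs arbitrary: ys)
  case Nil
  then show ?case by simp
next
  case (Cons x xs)
  have "x \<in> set ys" using Cons.prems(3) by (metis list.set_intros(1) set_mset_mset)
  then obtain ps qs where ys: "ys = ps @ x # qs" and nx: "x \<notin> set ps"
    using split_list_first by metis
  have eq: "\<forall>p\<in>set ps. u p = u x"
  proof
    fix p assume p: "p \<in> set ps"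
    have "u x \<le> u p" using Cons.prems(2) p unfolding ys by (auto simp: sorted_append)
    moreover have "p \<in> set (x # xs)" using p Cons.prems(3) unfolding ys
      by (metis Un_iff set_append set_mset_mset)
    hence "u p \<le> u x" using Cons.prems(1) by auto
    ultimately show "u p = u x" by simp
  qed
  have s: "sorted (map (\<lambda>x. - u x) (ps @ qs))" using Cons.prems(2) unfolding ys
    by (auto simp: sorted_append)
  have m: "mset xs = mset (ps @ qs)" using Cons.prems(3) unfolding ys by simp
  have "EU rv u a ys = EU rv u a (x # ps @ qs)" unfolding ys by (rule EU_move_front[OF eq])
  also have "\<dots> = EU rv u a (x # xs)" using Cons.IH[OF _ s m] Cons.prems(1) by simp
  finally show ?case by simp
qed

abbreviation ins where "ins u x xs \<equiv> insort_key (\<lambda>y. - u y) x xs"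

lemma ins_top:
  assumes "\<forall>y\<in>set xs. u y \<le> u e"
  shows "EU rv u a (ins u e xs) = phi u a e (EU rv u a xs)"
  using assms by (cases xs) auto

lemma fact1:
  assumes "u l \<le> u h"
  shows "EU rv u a (ins u h (ins u l xs)) - EU rv u a (ins u h xs)
         = (1 - a h) * (EU rv u a (ins u l xs) - EU rv u a xs)"
  using assms
proof (induction xs)
  case Nil
  then show ?case by (simp add: phi_def algebra_simps)
next
  case (Cons y ys)
  show ?case
  proof (cases "- u l \<le> - u y")
    case True
    then show ?thesis using Cons.prems by (simp add: phi_def algebra_simps)
  next
    case False
    show ?thesis
    proof (cases "- u h \<le> - u y")
      case True
      then show ?thesis using False by (simp add: phi_def algebra_simps)
    next
      case False2: False
      have "EU rv u a (ins u h (ins u l (y # ys))) - EU rv u a (ins u h (y # ys))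
          = (1 - a y) * (EU rv u a (ins u h (ins u l ys)) - EU rv u a (ins u h ys))"
        using False False2 by (simp add: phi_def algebra_simps)
      also have "\<dots> = (1 - a y) * ((1 - a h) * (EU rv u a (ins u l ys) - EU rv u a ys))"
        using Cons.IH Cons.prems by simp
      also have "\<dots> = (1 - a h) * (EU rv u a (ins u l (y # ys)) - EU rv u a (y # ys))"
        using False by (simp add: phi_def algebra_simps)
      finally show ?thesis .
    qed
  qed
qed

lemma fact2:
  assumes "0 \<le> a h" "a h \<le> 1" "u h \<le> v"
    and "\<forall>y\<in>set xs. 0 \<le> a y \<and> a y \<le> 1 \<and> u y \<le> v"
  shows "EU rv u a (ins u h xs) - EU rv u a xs \<le> a h * (v - EU rv u a xs)"
  using assms(4)
proof (induction xs)
  case Nil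
  have "a h * u h \<le> a h * v" using assms(1,3) by (simp add: mult_left_mono)
  then show ?case by (simp add: phi_def algebra_simps)
next
  case (Cons y ys)
  show ?case
  proof (cases "- u h \<le> - u y")
    case True
    have "a h * u h \<le> a h * v" using assms(1,3) by (simp add: mult_left_mono)
    then show ?thesis using True by (simp add: phi_def algebra_simps)
  next
    case False
    have y: "0 \<le> a y" "a y \<le> 1" "u y \<le> v" using Cons.prems by auto
    have IH: "EU rv u a (ins u h ys) - EU rv u a ys \<le> a h * (v - EU rv u a ys)"
      using Cons.IH Cons.prems by simp
    have "EU rv u a (ins u h (y # ys)) - EU rv u a (y # ys)
        = (1 - a y) * (EU rv u a (ins u h ys) - EU rv u a ys)"
      using False by (simp add: phi_def algebra_simps)
    also have "\<dots> \<le> (1 - a y) * (a h * (v - EU rv u a ys))"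
      using IH y by (simp add: mult_left_mono)
    also have "\<dots> \<le> a h * (v - EU rv u a (y # ys))"
    proof -
      have "a h * (v - EU rv u a (y # ys)) - (1 - a y) * (a h * (v - EU rv u a ys))
            = a h * (a y * (v - u y))"
        by (simp add: phi_def algebra_simps)
      moreover have "0 \<le> a h * (a y * (v - u y))" using y assms(1) by simp
      ultimately show ?thesis by linarith
    qed
    finally show ?thesis .
  qed
qed

lemma swap_le:
  assumes "0 \<le> a x" "\<forall>y\<in>set ys. 0 \<le> a y \<and> a y \<le> 1"
  shows "EU rv u a (x # ys) \<le> EU rv u a (ins u x ys)"
  using assms(2)
proof (induction ys)
  case Nil
  then show ?case by simp
next
  case (Cons y ys)
  show ?case
  proof (cases "- u x \<le> - u y")
    case True
    then show ?thesis by simp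
  next
    case False
    have y: "0 \<le> a y" "a y \<le> 1" using Cons.prems by auto
    have IH: "EU rv u a (x # ys) \<le> EU rv u a (ins u x ys)" using Cons.IH Cons.prems by simp
    have "EU rv u a (x # y # ys) \<le> phi u a y (phi u a x (EU rv u a ys))"
    proof -
      have "phi u a y (phi u a x (EU rv u a ys)) - EU rv u a (x # y # ys) = a x * a y * (u y - u x)"
        by (simp add: phi_def algebra_simps)
      moreover have "0 \<le> a x * a y * (u y - u x)" using False y assms(1) by simp
      ultimately show ?thesis by linarith
    qed
    also have "\<dots> \<le> phi u a y (EU rv u a (ins u x ys))"
      using IH y by (intro phi_mono) auto
    also have "\<dots> = EU rv u a (ins u x (y # ys))" using False by simp
    finally show ?thesis .
  qed
qed

lemma EU_le_sort:
  assumes "\<forall>y\<in>set xs. 0 \<le> a y \<and> a y \<le> 1"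
  shows "EU rv u a xs \<le> EU rv u a (sort_key (\<lambda>y. - u y) xs)"
  using assms
proof (induction xs)
  case Nil
  then show ?case by simp
next
  case (Cons x xs)
  have x: "0 \<le> a x" "a x \<le> 1" using Cons.prems by auto
  have "EU rv u a (x # xs) \<le> EU rv u a (x # sort_key (\<lambda>y. - u y) xs)"
    using Cons x by (simp add: phi_mono)
  also have "\<dots> \<le> EU rv u a (ins u x (sort_key (\<lambda>y. - u y) xs))"
    using Cons.prems x by (intro swap_le) auto
  finally show ?case by simp
qed

definition FS where "FS rv u a S = EU rv u a (sort_dec u S)"

lemma mset_sls: "finite A \<Longrightarrow> mset (sorted_list_of_set A) = mset_set A"
  by (metis mset_sorted_list_of_multiset sorted_list_of_mset_set)

lemma mset_sort_dec: "finite A \<Longrightarrow> mset (sort_dec u A) = mset_set A"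
  by (simp add: sort_dec_def mset_sls)

lemma sorted_sort_dec: "sorted (map (\<lambda>y. - u y) (sort_dec u A))"
  by (simp add: sort_dec_def)

lemma FS_ins:
  assumes "finite B" "x \<notin> B"
  shows "FS rv u a (insert x B) = EU rv u a (ins u x (sort_dec u B))"
  unfolding FS_def
  by (rule EU_unique) (use assms in \<open>simp_all add: sorted_sort_dec sorted_insort_key mset_sort_dec\<close>)

lemma FS_ins2:
  assumes "finite B" "x \<notin> B" "y \<notin> B" "x \<noteq> y"
  shows "FS rv u a (insert x (insert y B)) = EU rv u a (ins u x (ins u y (sort_dec u B)))"
  unfolding FS_def
  by (rule EU_unique) (use assms in \<open>simp_all add: sorted_sort_dec sorted_insort_key mset_sort_dec\<close>)

lemma set_sort_dec: "finite A \<Longrightarrow> set (sort_dec u A) = A"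
  by (simp add: sort_dec_def)

lemma FS_top:
  assumes "finite B" "e \<notin> B" "\<forall>y\<in>B. u y \<le> u e"
  shows "FS rv u a (insert e B) = phi u a e (FS rv u a B)"
proof -
  have "FS rv u a (insert e B) = EU rv u a (ins u e (sort_dec u B))" using FS_ins assms by blast
  also have "\<dots> = phi u a e (FS rv u a B)"
    using assms by (subst ins_top) (auto simp: set_sort_dec FS_def)
  finally show ?thesis .
qed

lemma FS_sort:
  assumes "distinct xs"
  shows "EU rv u a (sort_key (\<lambda>y. - u y) xs) = FS rv u a (set xs)"
  unfolding FS_def
  by (rule EU_unique) (use assms in \<open>simp_all add: sorted_sort_dec mset_sort_dec mset_set_set\<close>)

lemma L3:
  assumes "finite B" "e \<notin> B" "h \<notin> B" "l \<notin> B" "e \<noteq> h" "e \<noteq> l" "h \<noteq> l"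
    and "\<forall>y\<in>B. u y \<le> u e \<and> 0 \<le> a y \<and> a y \<le> 1"
    and "u h \<le> u e" "u l \<le> u h" "0 \<le> a e" "0 \<le> a h" "a h \<le> 1"
    and hyp: "FS rv u a (insert l B) \<le> FS rv u a (insert e B)"
  shows "FS rv u a (insert h (insert l B)) \<le> FS rv u a (insert e (insert h B))"
proof -
  define xs where "xs = sort_dec u B"
  define E0 where "E0 = EU rv u a xs"
  define El where "El = EU rv u a (ins u l xs)"
  define Eh where "Eh = EU rv u a (ins u h xs)"
  define Ehl where "Ehl = EU rv u a (ins u h (ins u l xs))"
  have sx: "set xs = B" using assms(1) by (simp add: xs_def set_sort_dec)
  have 1: "Ehl - Eh = (1 - a h) * (El - E0)"
    unfolding Ehl_def Eh_def El_def E0_def by (rule fact1) fact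
  have 2: "Eh - E0 \<le> a h * (u e - E0)"
    unfolding Eh_def E0_def using assms sx by (intro fact2) auto
  have fe: "FS rv u a (insert e B) = phi u a e E0"
    using FS_top[of B e u rv a] assms unfolding E0_def FS_def xs_def by auto
  have fl: "FS rv u a (insert l B) = El" using assms by (simp add: FS_ins El_def xs_def)
  have fh: "FS rv u a (insert h B) = Eh" using assms by (simp add: FS_ins Eh_def xs_def)
  have fhl: "FS rv u a (insert h (insert l B)) = Ehl" using assms by (simp add: FS_ins2 Ehl_def xs_def)
  have feh: "FS rv u a (insert e (insert h B)) = phi u a e Eh"
    using assms fh by (subst FS_top) auto
  define K where "K = a e * (u e - E0)"
  have h1: "El - E0 \<le> K" using hyp fe fl by (simp add: K_def phi_def algebra_simps)
  have h2: "a e * (Eh - E0) \<le> a h * K"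
    using mult_left_mono[OF 2 assms(11)] by (simp add: K_def algebra_simps)
  have h3: "(1 - a h) * (El - E0) \<le> (1 - a h) * K"
    using h1 assms(13) by (simp add: mult_left_mono)
  have "Ehl \<le> Eh + K - a e * (Eh - E0)" using 1 h2 h3 by (simp add: algebra_simps)
  also have "\<dots> = phi u a e Eh" by (simp add: K_def phi_def algebra_simps)
  finally show ?thesis using fhl feh by simp
qed

lemma phi_cancel: "a x < 1 \<Longrightarrow> phi u a x z \<le> phi u a x z' \<Longrightarrow> z \<le> z'"
  by (simp add: phi_def)

lemma card_diff_pos: "finite S \<Longrightarrow> finite T \<Longrightarrow> card S < card T \<Longrightarrow> \<exists>w. w \<in> T - S"
  by (metis Diff_eq_empty_iff card_mono equals0I not_le)

definition optk where
  "optk rv u a U k S \<longleftrightarrow> S \<subseteq> U \<and> card S = k \<and> (\<forall>R. R \<subseteq> U \<longrightarrow> card R = k \<longrightarrow> FS rv u a R \<le> FS rv u a S)"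

lemma main:
  assumes "finite U0" "\<forall>x\<in>U0. 0 \<le> a x \<and> a x \<le> 1"
  shows "\<forall>k S T. optk rv u a U0 k S \<longrightarrow> T \<subseteq> U0 \<longrightarrow> card T = Suc k \<longrightarrow>
            (\<exists>w\<in>U0 - S. FS rv u a T \<le> FS rv u a (insert w S))"
  using assms(1)
proof (induction U0 rule: finite_remove_induct)
  case empty
  then show ?case by auto
next
  case (remove A)
  let ?F = "FS rv u a"
  have bA: "\<forall>x\<in>A. 0 \<le> a x \<and> a x \<le> 1" using remove.hyps(3) assms(2) by auto
  obtain e where eA: "e \<in> A" and emax: "\<forall>y\<in>A. u y \<le> u e"
  proof -
    have "Max (u ` A) \<in> u ` A" using remove.hyps(1,2) by simp
    then obtain e where "e \<in> A" "u e = Max (u ` A)" by auto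
    moreover have "\<forall>y\<in>A. u y \<le> Max (u ` A)" using remove.hyps(1) by simp
    ultimately show ?thesis using that by auto
  qed
  define U' where "U' = A - {e}"
  have IH: "\<forall>k S T. optk rv u a U' k S \<longrightarrow> T \<subseteq> U' \<longrightarrow> card T = Suc k \<longrightarrow>
            (\<exists>w\<in>U' - S. ?F T \<le> ?F (insert w S))"
    using remove.IH[OF eA] unfolding U'_def .
  have finA: "finite A" by fact
  have finU': "finite U'" using finA by (simp add: U'_def)
  have ae: "0 \<le> a e" "a e \<le> 1" using bA eA by auto
  have top: "\<And>X. X \<subseteq> A \<Longrightarrow> e \<notin> X \<Longrightarrow> ?F (insert e X) = phi u a e (?F X)"
    using emax finA by (intro FS_top) (auto intro: finite_subset)
  show ?case
  proof (intro allI impI)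
    fix k S T
    assume oS: "optk rv u a A k S" and TA: "T \<subseteq> A" and cT: "card T = Suc k"
    have SA: "S \<subseteq> A" and cS: "card S = k"
      and opt: "\<And>R. R \<subseteq> A \<Longrightarrow> card R = k \<Longrightarrow> ?F R \<le> ?F S"
      using oS unfolding optk_def by auto
    have finS: "finite S" and finT: "finite T" using SA TA finA by (auto intro: finite_subset)
    show "\<exists>w\<in>A - S. ?F T \<le> ?F (insert w S)"
    proof (cases "e \<in> S")
      case False
      note eS = False
      show ?thesis
      proof (cases "e \<in> T")
        case False
        have "optk rv u a U' k S" using oS eS unfolding optk_def U'_def by auto
        moreover have "T \<subseteq> U'" using TA False by (auto simp: U'_def)
        ultimately obtain w where "w \<in> U' - S" "?F T \<le> ?F (insert w S)" using IH cT by blast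
        then show ?thesis by (auto simp: U'_def)
      next
        case True
        have Te: "T = insert e (T - {e})" using True by auto
        have "?F T = phi u a e (?F (T - {e}))" using top[of "T - {e}"] TA Te by auto
        also have "\<dots> \<le> phi u a e (?F S)"
          using opt[of "T - {e}"] TA cT True finT ae by (intro phi_mono) auto
        also have "\<dots> = ?F (insert e S)" using top SA eS by simp
        finally show ?thesis using eA eS by blast
      qed
    next
      case True
      note eS = True
      define S' where "S' = S - {e}"
      have SS': "S = insert e S'" using eS by (auto simp: S'_def)
      have S'U': "S' \<subseteq> U'" using SA by (auto simp: S'_def U'_def)
      have eS': "e \<notin> S'" by (simp add: S'_def)
      have FS: "?F S = phi u a e (?F S')" using top[of S'] SS' SA eS' by auto
      show ?thesis
      proof (cases "a e = 1")
        case True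
        have phic: "\<And>z. phi u a e z = u e" using True by (simp add: phi_def)
        obtain w where w: "w \<in> T - S" using card_diff_pos[OF finS finT] cS cT by auto
        have "insert w S = insert e (insert w S')" using SS' by auto
        hence Fw: "?F (insert w S) = u e" using top[of "insert w S'"] w TA SA eS' phic eS
          by (auto simp: S'_def)
        have "T \<noteq> {}" using cT by auto
        obtain t where tT: "t \<in> T" and tmax: "\<forall>y\<in>T. u y \<le> u t"
        proof -
          have "Max (u ` T) \<in> u ` T" using finT \<open>T \<noteq> {}\<close> by simp
          then obtain t where "t \<in> T" "u t = Max (u ` T)" by auto
          moreover have "\<forall>y\<in>T. u y \<le> Max (u ` T)" using finT by simp
          ultimately show ?thesis using that by auto
        qed
        have "?F T = phi u a t (?F (T - {t}))"
          using FS_top[of "T - {t}" t u rv a] finT tmax tT by (simp add: insert_absorb)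
        moreover have "?F (T - {t}) \<le> u e"
          using opt[of "T - {t}"] TA cT tT finT FS phic by auto
        moreover have "u t \<le> u e" "0 \<le> a t" "a t \<le> 1" using emax bA tT TA by auto
        ultimately have "?F T \<le> u e"
        proof -
          assume a1: "?F T = phi u a t (?F (T - {t}))" and a2: "?F (T - {t}) \<le> u e"
            and a3: "u t \<le> u e" "0 \<le> a t" "a t \<le> 1"
          have "u t * a t \<le> u e * a t" using a3 by (simp add: mult_right_mono)
          moreover have "(1 - a t) * ?F (T - {t}) \<le> (1 - a t) * u e" using a2 a3 by (simp add: mult_left_mono)
          ultimately show ?thesis using a1 by (simp add: phi_def algebra_simps)
        qed
        then show ?thesis using w Fw TA by (intro bexI[of _ w]) auto
      next
        case False
        hence ae1: "a e < 1" using ae by simp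
        obtain k' where k': "k = Suc k'" using cS eS finS by (cases k) auto
        have cS': "card S' = k'" using cS k' eS finS by (simp add: S'_def)
        have oS': "optk rv u a U' k' S'"
          unfolding optk_def
        proof (intro conjI allI impI)
          fix R assume RU: "R \<subseteq> U'" and cR: "card R = k'"
          have finR: "finite R" using RU finU' by (auto intro: finite_subset)
          have eR: "e \<notin> R" using RU by (auto simp: U'_def)
          have "?F (insert e R) \<le> ?F S"
          proof (rule opt)
            show "insert e R \<subseteq> A" using RU eA by (auto simp: U'_def)
            show "card (insert e R) = k" using cR finR eR k' by simp
          qed
          hence "phi u a e (?F R) \<le> phi u a e (?F S')" using top[of R] RU eR FS by (simp add: U'_def subset_Diff_insert)
          thus "?F R \<le> ?F S'" by (rule phi_cancel[of a e, OF ae1])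
        next
          show "S' \<subseteq> U'" by (rule S'U')
        next
          show "card S' = k'" by (rule cS')
        qed
        show ?thesis
        proof (cases "e \<in> T")
          case True
          define T' where "T' = T - {e}"
          have T'U': "T' \<subseteq> U'" using TA by (auto simp: T'_def U'_def)
          have cT': "card T' = Suc k'" using cT k' True finT by (simp add: T'_def)
          obtain w where w: "w \<in> U' - S'" and wle: "?F T' \<le> ?F (insert w S')"
            using IH[rule_format, OF oS' T'U' cT'] by blast
          have "?F T = phi u a e (?F T')" using top[of T'] TA True by (auto simp: T'_def insert_absorb)
          also have "\<dots> \<le> phi u a e (?F (insert w S'))" using wle ae by (intro phi_mono) auto
          also have "\<dots> = ?F (insert w S)"
            using top[of "insert w S'"] w SS' SA eS' by (auto simp: U'_def insert_commute)
          finally show ?thesis using w SS' by (auto simp: U'_def)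
        next
          case False
          note eT = False
          have TU': "T \<subseteq> U'" using TA eT by (auto simp: U'_def)
          obtain t where tT: "t \<in> T" using cT by (cases "T = {}") auto
          have cR0: "card (T - {t}) = Suc k'" using cT k' tT finT by simp
          have TR0: "T - {t} \<subseteq> U'" using TU' by auto
          obtain q0 where q0: "q0 \<in> U' - S'"
            using IH[rule_format, OF oS' TR0 cR0] by blast
          define M where "M = U' - S'"
          have finM: "finite M" using finU' by (simp add: M_def)
          obtain q where qM: "q \<in> M" and qmax: "\<forall>w\<in>M. ?F (insert w S') \<le> ?F (insert q S')"
          proof -
            have ne: "M \<noteq> {}" using q0 by (auto simp: M_def)
            have "Max ((\<lambda>w. ?F (insert w S')) ` M) \<in> (\<lambda>w. ?F (insert w S')) ` M"
              using finM ne by simp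
            then obtain q where "q \<in> M" "?F (insert q S') = Max ((\<lambda>w. ?F (insert w S')) ` M)" by auto
            moreover have "\<forall>w\<in>M. ?F (insert w S') \<le> Max ((\<lambda>w. ?F (insert w S')) ` M)"
              using finM by simp
            ultimately show ?thesis using that by auto
          qed
          define Q where "Q = insert q S'"
          have finS': "finite S'" using finS by (simp add: S'_def)
          have oQ: "optk rv u a U' k Q"
            unfolding optk_def
          proof (intro conjI allI impI)
            show "Q \<subseteq> U'" using qM S'U' by (auto simp: Q_def M_def)
            show "card Q = k" using qM finS' cS' k' by (auto simp: Q_def M_def)
            fix R assume RU: "R \<subseteq> U'" and cR: "card R = k"
            have cR': "card R = Suc k'" using cR k' by simp
            obtain w where "w \<in> U' - S'" "?F R \<le> ?F (insert w S')" using IH[rule_format, OF oS' RU cR'] by blast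
            then show "?F R \<le> ?F Q" using qmax by (force simp: Q_def M_def)
          qed
          obtain r where rM: "r \<in> U' - Q" and rle: "?F T \<le> ?F (insert r Q)"
            using IH[rule_format, OF oQ TU' cT] by blast
          have qS': "q \<notin> S'" "q \<in> U'" using qM by (auto simp: M_def)
          have rS': "r \<notin> S'" "r \<in> U'" "r \<noteq> q" using rM by (auto simp: Q_def)
          have Fq: "?F (insert q S') \<le> ?F (insert e S')"
            unfolding SS'[symmetric]
          proof (rule opt)
            show "insert q S' \<subseteq> A" using qS' S'U' by (auto simp: U'_def)
            show "card (insert q S') = k" using qS' finS' cS' k' by simp
          qed
          have Fr: "?F (insert r S') \<le> ?F (insert e S')"
          proof -
            have "insert r S' \<subseteq> A" using rS' S'U' by (auto simp: U'_def)
            moreover have "card (insert r S') = k" using rS' finS' cS' k' by simp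
            ultimately show ?thesis using opt SS' by simp
          qed
          have eqr: "e \<noteq> q" "e \<noteq> r" using qS' rS' by (auto simp: U'_def)
          have bS': "\<forall>y\<in>S'. u y \<le> u e \<and> 0 \<le> a y \<and> a y \<le> 1" using SA SS' emax bA by auto
          have ub: "u q \<le> u e" "u r \<le> u e" "0 \<le> a q" "a q \<le> 1" "0 \<le> a r" "a r \<le> 1"
            using qS' rS' emax bA by (auto simp: U'_def)
          have "\<exists>h l. ((h = q \<and> l = r) \<or> (h = r \<and> l = q)) \<and> u l \<le> u h"
          proof (cases "u r \<le> u q")
            case True thus ?thesis by blast
          next
            case False thus ?thesis by (intro exI[of _ r] exI[of _ q]) simp
          qed
          then obtain h l where hl2: "(h = q \<and> l = r) \<or> (h = r \<and> l = q)" and hl: "u l \<le> u h" by blast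
          have p1: "h \<notin> S'" "l \<notin> S'" "e \<noteq> h" "e \<noteq> l" "h \<noteq> l"
            using hl2 qS' rS' eqr by auto
          have p2: "u h \<le> u e" "0 \<le> a h" "a h \<le> 1" using hl2 ub by auto
          have p3: "?F (insert l S') \<le> ?F (insert e S')" using hl2 Fq Fr by auto
          have L: "?F (insert h (insert l S')) \<le> ?F (insert e (insert h S'))"
            using L3[OF finS' eS' p1 bS' p2(1) hl ae(1) p2(2,3) p3] .
          have "insert r Q = insert h (insert l S')" using hl2 by (auto simp: Q_def)
          hence "?F T \<le> ?F (insert e (insert h S'))" using rle L by simp
          moreover have "insert e (insert h S') = insert h S" using SS' by auto
          moreover have "h \<in> A - S" using hl2 qS' rS' SS' by (auto simp: U'_def)
          ultimately show ?thesis by auto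
        qed
      qed
    qed
  qed
qed

lemma greedy:
  assumes fin: "finite \<Omega>" and b: "\<forall>\<omega>\<in>\<Omega>. 0 \<le> a \<omega> \<and> a \<omega> \<le> 1"
    and run: "mia_run \<Omega> u a rv D xs"
  shows "k \<le> D \<Longrightarrow> optk rv u a \<Omega> k (set (take k xs))"
proof (induction k)
  case 0
  have "\<And>R. R \<subseteq> \<Omega> \<Longrightarrow> card R = 0 \<Longrightarrow> R = {}" using fin by (meson card_0_eq finite_subset)
  then show ?case unfolding optk_def by auto
next
  case (Suc k)
  have len: "length xs = D" using run by (simp add: mia_run_def)
  have kD: "k < D" using Suc.prems by simp
  let ?S = "set (take k xs)"
  have oS: "optk rv u a \<Omega> k ?S" using Suc by simp
  have xk: "xs ! k \<in> \<Omega> - ?S"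
    and xmax: "\<forall>\<omega>\<in>\<Omega> - ?S. FS rv u a (insert \<omega> ?S) \<le> FS rv u a (insert (xs ! k) ?S)"
    using run kD unfolding mia_run_def FS_def by auto
  have st: "set (take (Suc k) xs) = insert (xs ! k) ?S"
    using kD len by (simp add: take_Suc_conv_app_nth)
  have finS: "finite ?S" by simp
  have cS: "card ?S = k" using oS by (simp add: optk_def)
  have SO: "?S \<subseteq> \<Omega>" using oS by (simp add: optk_def)
  show ?case
    unfolding optk_def st
  proof (intro conjI allI impI)
    show "insert (xs ! k) ?S \<subseteq> \<Omega>" using xk SO by auto
    show "card (insert (xs ! k) ?S) = Suc k" using xk cS finS by simp
    fix R assume RO: "R \<subseteq> \<Omega>" and cR: "card R = Suc k"
    obtain w where w: "w \<in> \<Omega> - ?S" and le: "FS rv u a R \<le> FS rv u a (insert w ?S)"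
      using main[OF fin b, rule_format, OF oS RO cR] by blast
    show "FS rv u a R \<le> FS rv u a (insert (xs ! k) ?S)" using le xmax w by force
  qed
qed

theorem theorem1:
  fixes \<Omega> :: "'a::linorder set" and u a :: "'a \<Rightarrow> real" and rv :: real and D :: nat
    and xs :: "'a list"
  assumes "finite \<Omega>"
    and "\<forall>\<omega>\<in>\<Omega>. 0 \<le> u \<omega> \<and> u \<omega> \<le> 1"
    and "\<forall>\<omega>\<in>\<Omega>. 0 \<le> a \<omega> \<and> a \<omega> \<le> 1"
    and "0 < D" and "D \<le> card \<Omega>"
    and "mia_run \<Omega> u a rv D xs"
  shows "length (sort_dec u (set xs)) = D \<and> set (sort_dec u (set xs)) \<subseteq> \<Omega> \<and>
         (\<forall>\<pi>. length \<pi> = D \<and> set \<pi> \<subseteq> \<Omega> \<and> distinct \<pi> \<longrightarrow>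
              EU rv u a \<pi> \<le> EU rv u a (sort_dec u (set xs)))"
proof -
  have len: "length xs = D" using assms(6) by (simp add: mia_run_def)
  have o: "optk rv u a \<Omega> D (set (take D xs))" using greedy[OF assms(1,3,6)] by simp
  hence o': "optk rv u a \<Omega> D (set xs)" using len by simp
  have cx: "card (set xs) = D" and sO: "set xs \<subseteq> \<Omega>"
    and opt: "\<And>R. R \<subseteq> \<Omega> \<Longrightarrow> card R = D \<Longrightarrow> FS rv u a R \<le> FS rv u a (set xs)"
    using o' unfolding optk_def by auto
  have l1: "length (sort_dec u (set xs)) = D" using cx by (simp add: sort_dec_def)
  have l2: "set (sort_dec u (set xs)) \<subseteq> \<Omega>" using sO by (simp add: set_sort_dec)
  have l3: "EU rv u a \<pi> \<le> EU rv u a (sort_dec u (set xs))"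
    if p: "length \<pi> = D" "set \<pi> \<subseteq> \<Omega>" "distinct \<pi>" for \<pi>
  proof -
    have "EU rv u a \<pi> \<le> EU rv u a (sort_key (\<lambda>y. - u y) \<pi>)"
      using p assms(3) by (intro EU_le_sort) auto
    also have "\<dots> = FS rv u a (set \<pi>)" using p(3) by (rule FS_sort)
    also have "\<dots> \<le> FS rv u a (set xs)" using opt p by (simp add: distinct_card)
    finally show ?thesis by (simp add: FS_def)
  qed
  show ?thesis using l1 l2 l3 by blast
qed

end
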